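(* Let $q:V\to\overline K/\overline R$ be a non-trivial generalized $(\sigma,\varepsilon)$-quadratic form with sesquilinearization $f$, such that $P_q$ spans $\mathrm{PG}(V)$. A vector subspace $U$ of $V$ satisfies $[U]\cap P_q=\emptyset$ and $[U]\cap\ell=\emptyset$ for every line $\ell$ of $\mathrm{PG}(V)$ containing at least two points of $P_q$ (i.e. $U$ defines a quotient of the inclusion embedding of $S_q$ in $\mathrm{PG}(V)$) if and only if $U\subseteq\mathrm{Rad}(f)$ and $U\cap\mathrm{Rad}(q)=\{0\}$.
   Context: $K$ division ring, $(\sigma,\varepsilon)$ admissible pair ($\sigma$ anti-automorphism, $\varepsilon^\sigma\varepsilon=1$, $t^{\sigma^2}=\varepsilon t\varepsilon^{-1}$). $\overline K=K/\{t-t^\sigma\varepsilon\}_{t\in K}$, $\bar t$ class of $t$, $\bar t\circ\lambda=\overline{\lambda^\sigma t\lambda}$; closed subgroup: stable under all $\circ\lambda$; $(\bar t+\overline R)\circ\lambda=\bar t\circ\lambda+\overline R$. Generalized $(\sigma,\varepsilon)$-quadratic form with co-defect closed $\overline R$: $q:V\to\overline K/\overline R$ ($V$ right $K$-vector space) with $q(x\lambda)=q(x)\circ\lambda$ and trace-valued $(\sigma,\varepsilon)$-sesquilinear $f$ ($f(x\lambda,y\mu)=\lambda^\sigma f(x,y)\mu$, $f(y,x)=f(x,y)^\sigma\varepsilon$, $f(x,x)\in\{t+t^\sigma\varepsilon\}$) with $q(x+y)=q(x)+q(y)+(\overline{f(x,y)}+\overline R)$. Non-trivial: not identically $\overline R$.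 $P_q$: points $[x]$ with $q(x)=\overline R$. $[U]$: set of projective points of $U$. $\mathrm{Rad}(f)=\{x:f(x,V)=0\}$, $\mathrm{Rad}(q)=\{x\in\mathrm{Rad}(f):q(x)=\overline R\}$. *)

theory Defs
  imports Main
begin

definition anti_automorphism :: "('k::division_ring \<Rightarrow> 'k) \<Rightarrow> bool" where
  "anti_automorphism \<sigma> \<longleftrightarrow> bij \<sigma> \<and> (\<forall>a b. \<sigma> (a + b) = \<sigma> a + \<sigma> b) \<and> (\<forall>a b. \<sigma> (a * b) = \<sigma> b * \<sigma> a)"

definition admissible_pair :: "('k::division_ring \<Rightarrow> 'k) \<Rightarrow> 'k \<Rightarrow> bool" where
  "admissible_pair \<sigma> \<epsilon> \<longleftrightarrow> anti_automorphism \<sigma> \<and> \<sigma> \<epsilon> * \<epsilon> = 1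
     \<and> (\<forall>t. \<sigma> (\<sigma> t) = \<epsilon> * t * inverse \<epsilon>)"

definition trace_sub :: "('k::division_ring \<Rightarrow> 'k) \<Rightarrow> 'k \<Rightarrow> 'k set" where
  "trace_sub \<sigma> \<epsilon> = {t - \<sigma> t * \<epsilon> | t. True}"

definition kbar :: "('k::division_ring \<Rightarrow> 'k) \<Rightarrow> 'k \<Rightarrow> 'k \<Rightarrow> 'k set" where
  "kbar \<sigma> \<epsilon> t = (\<lambda>s. t + s) ` trace_sub \<sigma> \<epsilon>"

definition Kbar :: "('k::division_ring \<Rightarrow> 'k) \<Rightarrow> 'k \<Rightarrow> 'k set set" where
  "Kbar \<sigma> \<epsilon> = range (kbar \<sigma> \<epsilon>)"

text \<open>Addition of cosets (elements of Kbar).\<close>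
definition setplus :: "'k::plus set \<Rightarrow> 'k set \<Rightarrow> 'k set" where
  "setplus A B = {a + b | a b. a \<in> A \<and> b \<in> B}"

text \<open>Addition of cosets of a subgroup of Kbar (elements of Kbar / Rbar).\<close>
definition ssetplus :: "'k::plus set set \<Rightarrow> 'k set set \<Rightarrow> 'k set set" where
  "ssetplus X Y = {setplus A B | A B. A \<in> X \<and> B \<in> Y}"

definition kcirc :: "('k::division_ring \<Rightarrow> 'k) \<Rightarrow> 'k \<Rightarrow> 'k set \<Rightarrow> 'k \<Rightarrow> 'k set" where
  "kcirc \<sigma> \<epsilon> A l = (\<Union>a\<in>A. kbar \<sigma> \<epsilon> (\<sigma> l * a * l))"

definition closed_subgroup :: "('k::division_ring \<Rightarrow> 'k) \<Rightarrow> 'k \<Rightarrow> 'k set set \<Rightarrow> bool" where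
  "closed_subgroup \<sigma> \<epsilon> R \<longleftrightarrow> R \<subseteq> Kbar \<sigma> \<epsilon> \<and> kbar \<sigma> \<epsilon> 0 \<in> R
     \<and> (\<forall>A\<in>R. \<forall>B\<in>R. setplus A B \<in> R) \<and> (\<forall>A\<in>R. uminus ` A \<in> R)
     \<and> (\<forall>A\<in>R. \<forall>l. kcirc \<sigma> \<epsilon> A l \<in> R)"

text \<open>The coset tbar + Rbar in Kbar/Rbar.\<close>
definition qcoset :: "'k::division_ring set \<Rightarrow> 'k set set \<Rightarrow> 'k set set" where
  "qcoset A R = ssetplus {A} R"

definition KbarR :: "('k::division_ring \<Rightarrow> 'k) \<Rightarrow> 'k \<Rightarrow> 'k set set \<Rightarrow> 'k set set set" where
  "KbarR \<sigma> \<epsilon> R = {qcoset A R | A. A \<in> Kbar \<sigma> \<epsilon>}"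

definition qcirc :: "('k::division_ring \<Rightarrow> 'k) \<Rightarrow> 'k \<Rightarrow> 'k set set \<Rightarrow> 'k set set \<Rightarrow> 'k \<Rightarrow> 'k set set" where
  "qcirc \<sigma> \<epsilon> R X l = (\<Union>A\<in>X. qcoset (kcirc \<sigma> \<epsilon> A l) R)"

definition right_vector_space :: "('v::ab_group_add \<Rightarrow> 'k::division_ring \<Rightarrow> 'v) \<Rightarrow> bool" where
  "right_vector_space smul \<longleftrightarrow>
     (\<forall>x. smul x 1 = x) \<and> (\<forall>x a b. smul x (a * b) = smul (smul x a) b)
     \<and> (\<forall>x y a. smul (x + y) a = smul x a + smul y a)
     \<and> (\<forall>x a b. smul x (a + b) = smul x a + smul x b)"

definition subspace :: "('v::ab_group_add \<Rightarrow> 'k::division_ring \<Rightarrow> 'v) \<Rightarrow> 'v set \<Rightarrow> bool" where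
  "subspace smul U \<longleftrightarrow> 0 \<in> U \<and> (\<forall>x\<in>U. \<forall>y\<in>U. x + y \<in> U) \<and> (\<forall>x\<in>U. \<forall>a. smul x a \<in> U)"

definition rspan :: "('v::ab_group_add \<Rightarrow> 'k::division_ring \<Rightarrow> 'v) \<Rightarrow> 'v set \<Rightarrow> 'v set" where
  "rspan smul S = \<Inter>{W. subspace smul W \<and> S \<subseteq> W}"

text \<open>Projective point [x] (x nonzero): the 1-dimensional subspace xK.\<close>
definition ppoint :: "('v::ab_group_add \<Rightarrow> 'k::division_ring \<Rightarrow> 'v) \<Rightarrow> 'v \<Rightarrow> 'v set" where
  "ppoint smul x = range (smul x)"

definition ppoints :: "('v::ab_group_add \<Rightarrow> 'k::division_ring \<Rightarrow> 'v) \<Rightarrow> 'v set \<Rightarrow> 'v set set" where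
  "ppoints smul U = {ppoint smul x | x. x \<in> U \<and> x \<noteq> 0}"

definition is_line :: "('v::ab_group_add \<Rightarrow> 'k::division_ring \<Rightarrow> 'v) \<Rightarrow> 'v set \<Rightarrow> bool" where
  "is_line smul L \<longleftrightarrow> (\<exists>x y. (\<forall>a b. smul x a + smul y b = 0 \<longrightarrow> a = 0 \<and> b = 0)
       \<and> L = {smul x a + smul y b | a b. True})"

definition trace_valued_sesquilinear ::
  "('k::division_ring \<Rightarrow> 'k) \<Rightarrow> 'k \<Rightarrow> ('v::ab_group_add \<Rightarrow> 'k \<Rightarrow> 'v) \<Rightarrow> ('v \<Rightarrow> 'v \<Rightarrow> 'k) \<Rightarrow> bool" where
  "trace_valued_sesquilinear \<sigma> \<epsilon> smul f \<longleftrightarrow>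
     (\<forall>x y z. f (x + y) z = f x z + f y z) \<and> (\<forall>x y z. f x (y + z) = f x y + f x z)
     \<and> (\<forall>x y a b. f (smul x a) (smul y b) = \<sigma> a * f x y * b)
     \<and> (\<forall>x y. f y x = \<sigma> (f x y) * \<epsilon>)
     \<and> (\<forall>x. \<exists>t. f x x = t + \<sigma> t * \<epsilon>)"

definition gen_quadratic_form ::
  "('k::division_ring \<Rightarrow> 'k) \<Rightarrow> 'k \<Rightarrow> ('v::ab_group_add \<Rightarrow> 'k \<Rightarrow> 'v) \<Rightarrow> 'k set set
     \<Rightarrow> ('v \<Rightarrow> 'k set set) \<Rightarrow> ('v \<Rightarrow> 'v \<Rightarrow> 'k) \<Rightarrow> bool" where
  "gen_quadratic_form \<sigma> \<epsilon> smul R q f \<longleftrightarrow>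
     (\<forall>x. q x \<in> KbarR \<sigma> \<epsilon> R)
     \<and> (\<forall>x l. q (smul x l) = qcirc \<sigma> \<epsilon> R (q x) l)
     \<and> trace_valued_sesquilinear \<sigma> \<epsilon> smul f
     \<and> (\<forall>x y. q (x + y) = ssetplus (ssetplus (q x) (q y)) (qcoset (kbar \<sigma> \<epsilon> (f x y)) R))"

definition Pq :: "('v::ab_group_add \<Rightarrow> 'k::division_ring \<Rightarrow> 'v) \<Rightarrow> 'k set set \<Rightarrow> ('v \<Rightarrow> 'k set set) \<Rightarrow> 'v set set" where
  "Pq smul R q = {ppoint smul x | x. x \<noteq> 0 \<and> q x = R}"

definition Rad_f :: "('v \<Rightarrow> 'v \<Rightarrow> 'k::zero) \<Rightarrow> 'v set" where
  "Rad_f f = {x. \<forall>y. f x y = 0}"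

definition Rad_q :: "('v \<Rightarrow> 'v \<Rightarrow> 'k::zero) \<Rightarrow> 'k set set \<Rightarrow> ('v \<Rightarrow> 'k set set) \<Rightarrow> 'v set" where
  "Rad_q f R q = {x \<in> Rad_f f. q x = R}"

end

theory Submission
  imports Defs
begin


locale adm =
  fixes \<sigma> :: "'k::division_ring \<Rightarrow> 'k" and \<epsilon> :: 'k
  assumes adm: "admissible_pair \<sigma> \<epsilon>"
begin

lemma sadd: "\<sigma> (a + b) = \<sigma> a + \<sigma> b"
  using adm unfolding admissible_pair_def anti_automorphism_def by blast
lemma smult: "\<sigma> (a * b) = \<sigma> b * \<sigma> a"
  using adm unfolding admissible_pair_def anti_automorphism_def by blast
lemma sinj: "inj \<sigma>"
  using adm unfolding admissible_pair_def anti_automorphism_def bij_def by blast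
lemma seps: "\<sigma> \<epsilon> * \<epsilon> = 1"
  using adm unfolding admissible_pair_def by blast
lemma ss: "\<sigma> (\<sigma> t) = \<epsilon> * t * inverse \<epsilon>"
  using adm unfolding admissible_pair_def by blast
lemma s0: "\<sigma> 0 = 0"
proof -
  have "\<sigma> 0 = \<sigma> 0 + \<sigma> 0" using sadd[of 0 0] by simp
  thus ?thesis by simp
qed
lemma sneg: "\<sigma> (- a) = - \<sigma> a"
proof -
  have "\<sigma> (-a) + \<sigma> a = 0" using sadd[of "-a" a] s0 by simp
  thus ?thesis by (simp add: eq_neg_iff_add_eq_0)
qed
lemma sdiff: "\<sigma> (a - b) = \<sigma> a - \<sigma> b"
  using sadd[of a "-b"] sneg by simp
lemma s1: "\<sigma> 1 = 1"
proof -
  have "\<sigma> 1 \<noteq> 0" using sinj s0 by (metis injD zero_neq_one)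
  moreover have "\<sigma> 1 * 1 = \<sigma> 1 * \<sigma> 1" using smult[of 1 1] by simp
  ultimately show ?thesis by (metis mult_cancel_left)
qed
lemma eps_nz: "\<epsilon> \<noteq> 0" using seps by auto

abbreviation "T \<equiv> trace_sub \<sigma> \<epsilon>"

lemma T_iff: "t \<in> T \<longleftrightarrow> (\<exists>s. t = s - \<sigma> s * \<epsilon>)"
  unfolding trace_sub_def by blast
lemma T0: "0 \<in> T" unfolding T_iff by (rule exI[of _ 0]) (simp add: s0)
lemma Tadd: "a \<in> T \<Longrightarrow> b \<in> T \<Longrightarrow> a + b \<in> T"
proof -
  assume "a \<in> T" "b \<in> T"
  then obtain s1 s2 where e1: "a = s1 - \<sigma> s1 * \<epsilon>" and e2: "b = s2 - \<sigma> s2 * \<epsilon>" unfolding T_iff by blast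
  have "a + b = (s1 + s2) - \<sigma> (s1 + s2) * \<epsilon>" unfolding e1 e2 sadd by (simp add: algebra_simps)
  thus ?thesis unfolding T_iff by blast
qed
lemma Tneg: "a \<in> T \<Longrightarrow> - a \<in> T"
proof -
  assume "a \<in> T"
  then obtain s1 where e1: "a = s1 - \<sigma> s1 * \<epsilon>" unfolding T_iff by blast
  have "- a = (- s1) - \<sigma> (- s1) * \<epsilon>" unfolding e1 sneg by (simp add: algebra_simps)
  thus ?thesis unfolding T_iff by blast
qed
lemma Tdiff: "a \<in> T \<Longrightarrow> b \<in> T \<Longrightarrow> a - b \<in> T"
  using Tadd Tneg by (metis diff_conv_add_uminus)
lemma Tcirc: "a \<in> T \<Longrightarrow> \<sigma> l * a * l \<in> T"
proof -
  assume "a \<in> T"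
  then obtain s where s: "a = s - \<sigma> s * \<epsilon>" unfolding T_iff by blast
  define u where "u = \<sigma> l * s * l"
  have "\<sigma> u = \<sigma> l * \<sigma> s * (\<epsilon> * l * inverse \<epsilon>)"
    unfolding u_def by (simp add: smult ss mult.assoc)
  hence "\<sigma> u * \<epsilon> = \<sigma> l * \<sigma> s * \<epsilon> * l"
    using eps_nz by (simp add: mult.assoc)
  hence "\<sigma> l * a * l = u - \<sigma> u * \<epsilon>"
    unfolding s u_def by (simp add: algebra_simps)
  thus ?thesis unfolding T_iff by blast
qed

lemma kbar_alt: "kbar \<sigma> \<epsilon> a = {c. c - a \<in> T}"
proof (rule set_eqI)
  fix c
  show "c \<in> kbar \<sigma> \<epsilon> a \<longleftrightarrow> c \<in> {c. c - a \<in> T}"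
  proof
    assume "c \<in> kbar \<sigma> \<epsilon> a"
    then obtain s where "s \<in> T" "c = a + s" unfolding kbar_def by blast
    thus "c \<in> {c. c - a \<in> T}" by simp
  next
    assume "c \<in> {c. c - a \<in> T}"
    hence "c - a \<in> T" "c = a + (c - a)" by simp_all
    thus "c \<in> kbar \<sigma> \<epsilon> a" unfolding kbar_def by blast
  qed
qed

lemma kbar_eq: "kbar \<sigma> \<epsilon> a = kbar \<sigma> \<epsilon> b \<longleftrightarrow> a - b \<in> T"
proof
  assume "kbar \<sigma> \<epsilon> a = kbar \<sigma> \<epsilon> b"
  moreover have "a \<in> kbar \<sigma> \<epsilon> a" unfolding kbar_alt using T0 by simp
  ultimately show "a - b \<in> T" unfolding kbar_alt by auto
next
  assume h: "a - b \<in> T"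
  { fix c assume "c - a \<in> T"
    hence "c - b \<in> T" using Tadd[OF _ h] by (metis diff_add_cancel add_diff_eq) }
  moreover
  { fix c assume "c - b \<in> T"
    hence "c - a \<in> T" using Tdiff[OF _ h] by (metis diff_diff_eq2 diff_add_cancel add_diff_eq) }
  ultimately show "kbar \<sigma> \<epsilon> a = kbar \<sigma> \<epsilon> b" unfolding kbar_alt by blast
qed

lemma setplus_kbar: "setplus (kbar \<sigma> \<epsilon> a) (kbar \<sigma> \<epsilon> b) = kbar \<sigma> \<epsilon> (a + b)"
proof (rule set_eqI)
  fix e
  show "e \<in> setplus (kbar \<sigma> \<epsilon> a) (kbar \<sigma> \<epsilon> b) \<longleftrightarrow> e \<in> kbar \<sigma> \<epsilon> (a + b)"
  proof
    assume "e \<in> setplus (kbar \<sigma> \<epsilon> a) (kbar \<sigma> \<epsilon> b)"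
    then obtain c d where "e = c + d" "c - a \<in> T" "d - b \<in> T"
      unfolding setplus_def kbar_alt by blast
    moreover have eq: "(c + d) - (a + b) = (c - a) + (d - b)" by (simp add: algebra_simps)
    moreover have h: "(c - a) + (d - b) \<in> T" using calculation Tadd by blast
    ultimately show "e \<in> kbar \<sigma> \<epsilon> (a + b)" unfolding kbar_alt by (simp only: mem_Collect_eq eq h)
  next
    assume "e \<in> kbar \<sigma> \<epsilon> (a + b)"
    hence "(e - b) - a \<in> T" unfolding kbar_alt by (simp add: algebra_simps)
    moreover have "b - b \<in> T" using T0 by simp
    moreover have "e = (e - b) + b" by simp
    ultimately show "e \<in> setplus (kbar \<sigma> \<epsilon> a) (kbar \<sigma> \<epsilon> b)"
      unfolding setplus_def kbar_alt by blast
  qed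
qed

lemma uminus_kbar: "uminus ` kbar \<sigma> \<epsilon> a = kbar \<sigma> \<epsilon> (- a)"
proof (rule set_eqI)
  fix e
  show "e \<in> uminus ` kbar \<sigma> \<epsilon> a \<longleftrightarrow> e \<in> kbar \<sigma> \<epsilon> (- a)"
  proof
    assume "e \<in> uminus ` kbar \<sigma> \<epsilon> a"
    then obtain c where "e = - c" "c - a \<in> T" unfolding kbar_alt by blast
    thus "e \<in> kbar \<sigma> \<epsilon> (- a)" unfolding kbar_alt using Tneg[of "c - a"] by (simp add: algebra_simps)
  next
    assume "e \<in> kbar \<sigma> \<epsilon> (- a)"
    hence "e + a \<in> T" unfolding kbar_alt by simp
    hence "- (e + a) \<in> T" by (rule Tneg)
    moreover have "- (e + a) = (- e) - a" by (simp add: algebra_simps)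
    ultimately have "(- e) - a \<in> T" by simp
    thus "e \<in> uminus ` kbar \<sigma> \<epsilon> a" unfolding kbar_alt by (auto intro!: image_eqI[of _ _ "- e"])
  qed
qed

lemma kcirc_kbar: "kcirc \<sigma> \<epsilon> (kbar \<sigma> \<epsilon> a) l = kbar \<sigma> \<epsilon> (\<sigma> l * a * l)"
proof -
  have "\<And>c. c \<in> kbar \<sigma> \<epsilon> a \<Longrightarrow> kbar \<sigma> \<epsilon> (\<sigma> l * c * l) = kbar \<sigma> \<epsilon> (\<sigma> l * a * l)"
  proof -
    fix c assume "c \<in> kbar \<sigma> \<epsilon> a"
    hence "\<sigma> l * (c - a) * l \<in> T" unfolding kbar_alt using Tcirc by blast
    moreover have "\<sigma> l * (c - a) * l = \<sigma> l * c * l - \<sigma> l * a * l" by (simp add: algebra_simps)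
    ultimately show "kbar \<sigma> \<epsilon> (\<sigma> l * c * l) = kbar \<sigma> \<epsilon> (\<sigma> l * a * l)"
      using kbar_eq by simp
  qed
  moreover have "a \<in> kbar \<sigma> \<epsilon> a" unfolding kbar_alt using T0 by simp
  ultimately show ?thesis unfolding kcirc_def by blast
qed

end

locale admR = adm +
  fixes R :: "'a set set"
  assumes cl: "closed_subgroup \<sigma> \<epsilon> R"
begin

definition "R0 = {t. kbar \<sigma> \<epsilon> t \<in> R}"

lemma R_img: "R = kbar \<sigma> \<epsilon> ` R0"
proof -
  have "R \<subseteq> range (kbar \<sigma> \<epsilon>)" using cl unfolding closed_subgroup_def Kbar_def by blast
  thus ?thesis unfolding R0_def by blast
qed
lemma R00: "0 \<in> R0" using cl unfolding closed_subgroup_def R0_def by blast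
lemma R0add: "a \<in> R0 \<Longrightarrow> b \<in> R0 \<Longrightarrow> a + b \<in> R0"
  using cl setplus_kbar unfolding closed_subgroup_def R0_def by fastforce
lemma R0neg: "a \<in> R0 \<Longrightarrow> - a \<in> R0"
  using cl uminus_kbar unfolding closed_subgroup_def R0_def by fastforce
lemma R0diff: "a \<in> R0 \<Longrightarrow> b \<in> R0 \<Longrightarrow> a - b \<in> R0"
  using R0add R0neg by (metis diff_conv_add_uminus)
lemma R0circ: "a \<in> R0 \<Longrightarrow> \<sigma> l * a * l \<in> R0"
  using cl kcirc_kbar unfolding closed_subgroup_def R0_def by fastforce
lemma T_R0: "t \<in> T \<Longrightarrow> t \<in> R0"
  using R00 kbar_eq[of t 0] unfolding R0_def by simp

abbreviation "Q a \<equiv> qcoset (kbar \<sigma> \<epsilon> a) R"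

lemma Q_alt: "Q a = kbar \<sigma> \<epsilon> ` {c. c - a \<in> R0}"
proof (rule set_eqI, rule iffI)
  fix X assume "X \<in> Q a"
  then obtain B where B: "B \<in> R" "X = setplus (kbar \<sigma> \<epsilon> a) B"
    unfolding qcoset_def ssetplus_def by blast
  then obtain r where r: "r \<in> R0" "B = kbar \<sigma> \<epsilon> r" using R_img by blast
  have "X = kbar \<sigma> \<epsilon> (a + r)" using B r setplus_kbar by simp
  moreover have "(a + r) - a \<in> R0" using r by simp
  ultimately show "X \<in> kbar \<sigma> \<epsilon> ` {c. c - a \<in> R0}" by blast
next
  fix X assume "X \<in> kbar \<sigma> \<epsilon> ` {c. c - a \<in> R0}"
  then obtain c where c: "c - a \<in> R0" "X = kbar \<sigma> \<epsilon> c" by blast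
  have "kbar \<sigma> \<epsilon> (c - a) \<in> R" using c R_img by blast
  moreover have "X = setplus (kbar \<sigma> \<epsilon> a) (kbar \<sigma> \<epsilon> (c - a))" using c setplus_kbar by simp
  ultimately show "X \<in> Q a" unfolding qcoset_def ssetplus_def by blast
qed

lemma Q_eq: "Q a = Q b \<longleftrightarrow> a - b \<in> R0"
proof
  assume "Q a = Q b"
  moreover have "kbar \<sigma> \<epsilon> a \<in> Q a" unfolding Q_alt using R00 by simp
  ultimately obtain c where c: "c - b \<in> R0" "kbar \<sigma> \<epsilon> a = kbar \<sigma> \<epsilon> c" unfolding Q_alt by auto
  hence "a - c \<in> R0" using kbar_eq T_R0 by blast
  with c have "(a - c) + (c - b) \<in> R0" using R0add by blast
  thus "a - b \<in> R0" by simp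
next
  assume h: "a - b \<in> R0"
  have "{c. c - a \<in> R0} = {c. c - b \<in> R0}"
  proof (rule set_eqI, rule iffI)
    fix c assume "c \<in> {c. c - a \<in> R0}"
    hence "(c - a) + (a - b) \<in> R0" using R0add h by blast
    thus "c \<in> {c. c - b \<in> R0}" by simp
  next
    fix c assume "c \<in> {c. c - b \<in> R0}"
    hence "(c - b) - (a - b) \<in> R0" using R0diff h by blast
    thus "c \<in> {c. c - a \<in> R0}" by simp
  qed
  thus "Q a = Q b" unfolding Q_alt by simp
qed

lemma Q_R: "Q 0 = R"
proof -
  have "Q 0 = kbar \<sigma> \<epsilon> ` R0" unfolding Q_alt by simp
  thus ?thesis using R_img by simp
qed

lemma Q_is_R: "Q a = R \<longleftrightarrow> a \<in> R0"
  using Q_eq[of a 0] unfolding Q_R by simp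

lemma Q_add: "ssetplus (Q a) (Q b) = Q (a + b)"
proof -
  have "ssetplus (Q a) (Q b) = {kbar \<sigma> \<epsilon> (c + d) | c d. c - a \<in> R0 \<and> d - b \<in> R0}"
    unfolding ssetplus_def Q_alt by (auto simp: setplus_kbar) (blast, metis (mono_tags) image_eqI mem_Collect_eq setplus_kbar)
  also have "\<dots> = Q (a + b)"
  proof (rule set_eqI, rule iffI)
    fix X assume "X \<in> {kbar \<sigma> \<epsilon> (c + d) | c d. c - a \<in> R0 \<and> d - b \<in> R0}"
    then obtain c d where "X = kbar \<sigma> \<epsilon> (c + d)" "c - a \<in> R0" "d - b \<in> R0" by blast
    moreover have eq: "(c + d) - (a + b) = (c - a) + (d - b)" by (simp add: algebra_simps)
    moreover have h: "(c - a) + (d - b) \<in> R0" using calculation R0add by blast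
    ultimately show "X \<in> Q (a + b)" unfolding Q_alt by (auto simp only: mem_Collect_eq eq h image_iff)
  next
    fix X assume "X \<in> Q (a + b)"
    then obtain e where e: "X = kbar \<sigma> \<epsilon> e" "e - (a + b) \<in> R0" unfolding Q_alt by blast
    have "X = kbar \<sigma> \<epsilon> ((e - b) + b)" using e by simp
    moreover have "(e - b) - a \<in> R0" using e by (simp add: algebra_simps)
    moreover have "b - b \<in> R0" using R00 by simp
    ultimately show "X \<in> {kbar \<sigma> \<epsilon> (c + d) | c d. c - a \<in> R0 \<and> d - b \<in> R0}" by blast
  qed
  finally show ?thesis .
qed

lemma Q_circ: "qcirc \<sigma> \<epsilon> R (Q a) l = Q (\<sigma> l * a * l)"
proof -
  have "qcirc \<sigma> \<epsilon> R (Q a) l = (\<Union>c\<in>{c. c - a \<in> R0}. Q (\<sigma> l * c * l))"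
    unfolding qcirc_def Q_alt[of a] by (simp add: kcirc_kbar)
  also have "\<dots> = Q (\<sigma> l * a * l)"
  proof -
    have "\<And>c. c - a \<in> R0 \<Longrightarrow> Q (\<sigma> l * c * l) = Q (\<sigma> l * a * l)"
    proof -
      fix c assume "c - a \<in> R0"
      hence "\<sigma> l * (c - a) * l \<in> R0" by (rule R0circ)
      moreover have "\<sigma> l * (c - a) * l = \<sigma> l * c * l - \<sigma> l * a * l" by (simp add: algebra_simps)
      ultimately show "Q (\<sigma> l * c * l) = Q (\<sigma> l * a * l)" using Q_eq by simp
    qed
    moreover have "a \<in> {c. c - a \<in> R0}" using R00 by simp
    ultimately show ?thesis by blast
  qed
  finally show ?thesis .
qed

end


lemma dep2: "\<exists>x y. (x \<noteq> 0 \<or> y \<noteq> 0) \<and> p * x + q * y = (0::'k::division_ring)"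
proof (cases "p = 0")
  case True thus ?thesis by (intro exI[of _ 1] exI[of _ 0]) simp
next
  case False
  have "p * (- (inverse p * q)) + q * 1 = 0"
    using False by (simp add: mult.assoc[symmetric])
  thus ?thesis by (intro exI[of _ "- (inverse p * q)"] exI[of _ 1]) simp
qed

lemma dep3a:
  fixes a1 a2 a3 b1 b2 b3 :: "'k::division_ring"
  assumes "a1 \<noteq> 0"
  shows "\<exists>c1 c2 c3. (c1 \<noteq> 0 \<or> c2 \<noteq> 0 \<or> c3 \<noteq> 0) \<and> a1*c1 + a2*c2 + a3*c3 = 0 \<and> b1*c1 + b2*c2 + b3*c3 = 0"
proof -
  obtain x y where xy: "x \<noteq> 0 \<or> y \<noteq> 0"
    "(b2 - b1 * inverse a1 * a2) * x + (b3 - b1 * inverse a1 * a3) * y = 0"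
    using dep2 by blast
  define c1 where "c1 = - (inverse a1 * (a2 * x + a3 * y))"
  have e1: "a1 * c1 = - (a2 * x + a3 * y)"
    unfolding c1_def using assms by (simp add: mult.assoc[symmetric])
  have e2: "b1 * c1 = - (b1 * inverse a1 * a2 * x + b1 * inverse a1 * a3 * y)"
    unfolding c1_def by (simp add: algebra_simps)
  have "a1*c1 + a2*x + a3*y = 0" using e1 by simp
  moreover have "b1*c1 + b2*x + b3*y = 0"
    using xy(2) unfolding e2 by (simp add: algebra_simps)
  ultimately show ?thesis using xy(1) by blast
qed

lemma dep3:
  fixes a1 a2 a3 b1 b2 b3 :: "'k::division_ring"
  shows "\<exists>c1 c2 c3. (c1 \<noteq> 0 \<or> c2 \<noteq> 0 \<or> c3 \<noteq> 0) \<and> a1*c1 + a2*c2 + a3*c3 = 0 \<and> b1*c1 + b2*c2 + b3*c3 = 0"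
proof -
  consider "a1 \<noteq> 0" | "a2 \<noteq> 0" | "a3 \<noteq> 0" | "a1 = 0 \<and> a2 = 0 \<and> a3 = 0" by blast
  thus ?thesis
  proof cases
    case 1 thus ?thesis using dep3a by blast
  next
    case 2
    from dep3a[OF 2, of a1 a3 b2 b1 b3] obtain c1 c2 c3 where
      "(c1 \<noteq> 0 \<or> c2 \<noteq> 0 \<or> c3 \<noteq> 0)" "a2*c1 + a1*c2 + a3*c3 = 0" "b2*c1 + b1*c2 + b3*c3 = 0" by blast
    thus ?thesis by (intro exI[of _ c2] exI[of _ c1] exI[of _ c3]) (auto simp: algebra_simps)
  next
    case 3
    from dep3a[OF 3, of a1 a2 b3 b1 b2] obtain c1 c2 c3 where
      "(c1 \<noteq> 0 \<or> c2 \<noteq> 0 \<or> c3 \<noteq> 0)" "a3*c1 + a1*c2 + a2*c3 = 0" "b3*c1 + b1*c2 + b2*c3 = 0" by blast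
    thus ?thesis by (intro exI[of _ c2] exI[of _ c3] exI[of _ c1]) (auto simp: algebra_simps)
  next
    case 4
    from dep2[of b1 b2] obtain x y where "x \<noteq> 0 \<or> y \<noteq> 0" "b1 * x + b2 * y = 0" by blast
    thus ?thesis using 4 by (intro exI[of _ x] exI[of _ y] exI[of _ 0]) auto
  qed
qed



locale geo =
  fixes \<sigma> :: "'k::division_ring \<Rightarrow> 'k" and \<epsilon> :: 'k
    and smul :: "'v::ab_group_add \<Rightarrow> 'k \<Rightarrow> 'v"
    and f :: "'v \<Rightarrow> 'v \<Rightarrow> 'k" and g :: "'v \<Rightarrow> 'k" and R0 :: "'k set"
  assumes smult: "\<sigma> (a * b) = \<sigma> b * \<sigma> a" and s1: "\<sigma> 1 = 1" and s0: "\<sigma> 0 = 0"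
    and vs: "right_vector_space smul"
    and ftv: "trace_valued_sesquilinear \<sigma> \<epsilon> smul f"
    and R00: "0 \<in> R0" and R0add: "\<And>a b. a \<in> R0 \<Longrightarrow> b \<in> R0 \<Longrightarrow> a + b \<in> R0"
    and R0neg: "\<And>a. a \<in> R0 \<Longrightarrow> - a \<in> R0"
    and R0circ: "\<And>a l. a \<in> R0 \<Longrightarrow> \<sigma> l * a * l \<in> R0"
    and gsm: "\<And>x l. g (smul x l) - \<sigma> l * g x * l \<in> R0"
    and gadd: "\<And>x y. g (x + y) - (g x + g y + f x y) \<in> R0"
begin

lemma R0diff: "a \<in> R0 \<Longrightarrow> b \<in> R0 \<Longrightarrow> a - b \<in> R0"
  using R0add R0neg by (metis diff_conv_add_uminus)

lemma sm1: "smul x 1 = x" using vs unfolding right_vector_space_def by blast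
lemma smA: "smul (smul x a) b = smul x (a * b)" using vs unfolding right_vector_space_def by metis
lemma smV: "smul (x + y) a = smul x a + smul y a" using vs unfolding right_vector_space_def by blast
lemma smS: "smul x (a + b) = smul x a + smul x b" using vs unfolding right_vector_space_def by blast

lemma sm0v: "smul 0 a = 0"
proof -
  have "smul (0 + 0) a = smul 0 a + smul 0 a" by (rule smV)
  thus ?thesis by simp
qed
lemma smv0: "smul x 0 = 0"
proof -
  have "smul x (0 + 0) = smul x 0 + smul x 0" by (rule smS)
  thus ?thesis by simp
qed
lemma smneg: "smul x (- a) = - smul x a"
proof -
  have "smul x (a + - a) = smul x a + smul x (- a)" by (rule smS)
  thus ?thesis by (simp add: smv0 eq_neg_iff_add_eq_0 add.commute)
qed
lemma smnegv: "smul (- x) a = - smul x a"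
proof -
  have "smul (x + - x) a = smul x a + smul (- x) a" by (rule smV)
  thus ?thesis by (simp add: sm0v eq_neg_iff_add_eq_0 add.commute)
qed
lemma smdiffv: "smul (x - y) a = smul x a - smul y a"
  using smV[of x "- y" a] smnegv by simp
lemma smdiff: "smul x a - smul x b = smul x (a - b)"
  using smS[of x a "- b"] smneg by simp
lemma sm_nz: "smul x a = 0 \<Longrightarrow> a \<noteq> 0 \<Longrightarrow> x = 0"
proof -
  assume "smul x a = 0" "a \<noteq> 0"
  hence "smul (smul x a) (inverse a) = 0" by (simp add: sm0v)
  thus "x = 0" using \<open>a \<noteq> 0\<close> by (simp add: smA sm1)
qed
lemma lincomb: "smul (smul x a + smul y b) c = smul x (a * c) + smul y (b * c)"
  by (simp add: smV smA)

lemma solve2: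
  assumes "smul a c1 + smul b c2 = 0" "c1 \<noteq> 0"
  shows "a = smul b (- (c2 * inverse c1))"
proof -
  have "smul a c1 = - smul b c2" using assms(1) by (simp add: eq_neg_iff_add_eq_0)
  hence "smul (smul a c1) (inverse c1) = smul (- smul b c2) (inverse c1)" by simp
  thus ?thesis using assms(2) by (simp add: smA sm1 smnegv smneg)
qed

lemma solve3:
  assumes "smul a c1 + smul b c2 + smul c c3 = 0" "c1 \<noteq> 0"
  shows "a = smul b (- (c2 * inverse c1)) + smul c (- (c3 * inverse c1))"
proof -
  have "smul a c1 + (smul b c2 + smul c c3) = 0" using assms(1) by (simp only: add.assoc)
  hence "smul a c1 = - (smul b c2 + smul c c3)" unfolding eq_neg_iff_add_eq_0 .
  hence "smul (smul a c1) (inverse c1) = smul (- (smul b c2 + smul c c3)) (inverse c1)" by simp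
  thus ?thesis using assms(2) by (simp add: smA sm1 smnegv smneg smV smdiffv)
qed

lemma fadd1: "f (x + y) z = f x z + f y z" using ftv unfolding trace_valued_sesquilinear_def by blast
lemma fadd2: "f x (y + z) = f x y + f x z" using ftv unfolding trace_valued_sesquilinear_def by blast
lemma fsm: "f (smul x a) (smul y b) = \<sigma> a * f x y * b" using ftv unfolding trace_valued_sesquilinear_def by blast
lemma fsym: "f y x = \<sigma> (f x y) * \<epsilon>" using ftv unfolding trace_valued_sesquilinear_def by blast

lemma f0l: "f 0 y = 0"
proof -
  have "f (0 + 0) y = f 0 y + f 0 y" by (rule fadd1)
  thus ?thesis by simp
qed
lemma f0r: "f x 0 = 0"
proof -
  have "f x (0 + 0) = f x 0 + f x 0" by (rule fadd2)
  thus ?thesis by simp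
qed
lemma fr: "f x (smul y b) = f x y * b"
  using fsm[of x 1 y b] by (simp add: sm1 s1)
lemma frad: "x \<in> Rad_f f \<Longrightarrow> f y x = 0"
proof -
  assume "x \<in> Rad_f f"
  hence "f x y = 0" unfolding Rad_f_def by blast
  moreover have "f y x = \<sigma> (f x y) * \<epsilon>" by (rule fsym)
  ultimately show "f y x = 0" using s0 by simp
qed

lemma g_sm: "g x \<in> R0 \<Longrightarrow> g (smul x l) \<in> R0"
proof -
  assume "g x \<in> R0"
  hence "(g (smul x l) - \<sigma> l * g x * l) + \<sigma> l * g x * l \<in> R0"
    using R0add gsm R0circ by blast
  thus ?thesis by simp
qed

lemma circ_inv: "\<sigma> c * a * c \<in> R0 \<Longrightarrow> c \<noteq> 0 \<Longrightarrow> a \<in> R0"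
proof -
  assume h: "\<sigma> c * a * c \<in> R0" "c \<noteq> 0"
  have "\<sigma> (inverse c) * \<sigma> c = 1" using smult[of c "inverse c"] h(2) s1 by simp
  hence "\<sigma> (inverse c) * (\<sigma> c * a * c) * inverse c = a"
    using h(2) by (simp add: mult.assoc[symmetric]) (simp add: mult.assoc)
  thus ?thesis using R0circ[OF h(1), of "inverse c"] by simp
qed

lemma g_sm_inv: "g (smul x l) \<in> R0 \<Longrightarrow> l \<noteq> 0 \<Longrightarrow> g x \<in> R0"
proof -
  assume "g (smul x l) \<in> R0" "l \<noteq> 0"
  hence "g (smul (smul x l) (inverse l)) \<in> R0" using g_sm[of "smul x l" "inverse l"] by blast
  thus ?thesis using \<open>l \<noteq> 0\<close> by (simp add: smA sm1)
qed

lemma g0: "g 0 \<in> R0"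
proof -
  have "g (0 + 0) - (g 0 + g 0 + f 0 0) \<in> R0" by (rule gadd)
  hence "- g 0 \<in> R0" by (simp add: f0l)
  hence "- (- g 0) \<in> R0" by (rule R0neg)
  thus ?thesis by simp
qed

lemma sum_sing:
  assumes "g z \<in> R0" "g z' \<in> R0" "w \<in> Rad_f f" "z = smul z' b + smul w d"
  shows "d = 0 \<or> g w \<in> R0"
proof -
  define A where "A = smul z' b"
  define B where "B = smul w d"
  have h1: "g (A + B) - (g A + g B + f A B) \<in> R0" by (rule gadd)
  have fAB: "f A B = 0" unfolding A_def B_def fsm using frad[OF assms(3)] by simp
  have h2: "g A \<in> R0" unfolding A_def using g_sm assms(2) by blast
  have h3: "g B - \<sigma> d * g w * d \<in> R0" unfolding B_def by (rule gsm)
  have zAB: "z = A + B" using assms(4) A_def B_def by simp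
  have "\<sigma> d * g w * d = (- (g (A + B) - (g A + g B + f A B)) + g z) - g A - (g B - \<sigma> d * g w * d)"
    using fAB zAB by (simp add: algebra_simps)
  moreover have "(- (g (A + B) - (g A + g B + f A B)) + g z) - g A - (g B - \<sigma> d * g w * d) \<in> R0"
    by (intro R0diff R0add R0neg h1 h2 h3 assms(1))
  ultimately have "\<sigma> d * g w * d \<in> R0" by simp
  thus ?thesis using circ_inv by blast
qed

lemma pp_self: "x \<in> ppoint smul x" unfolding ppoint_def using sm1 by (metis rangeI)
lemma pp_eqD: "ppoint smul x = ppoint smul y \<Longrightarrow> \<exists>c. x = smul y c"
  using pp_self[of x] unfolding ppoint_def by auto
lemma pp_scale: "c \<noteq> 0 \<Longrightarrow> ppoint smul (smul x c) = ppoint smul x"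
proof -
  assume c: "c \<noteq> 0"
  have "range (\<lambda>a. smul x (c * a)) = range (smul x)"
  proof (rule set_eqI, rule iffI)
    fix v assume "v \<in> range (smul x)"
    then obtain a where "v = smul x a" by blast
    hence "v = smul x (c * (inverse c * a))" using c by (simp add: mult.assoc[symmetric])
    thus "v \<in> range (\<lambda>a. smul x (c * a))" by blast
  qed blast
  thus ?thesis unfolding ppoint_def by (simp add: smA)
qed
lemma pp_prop: "z = smul z' b \<Longrightarrow> z \<noteq> 0 \<Longrightarrow> ppoint smul z = ppoint smul z'"
  using pp_scale smv0 by metis

end


context geo begin

definition "Sg = {ppoint smul x | x. x \<noteq> 0 \<and> g x \<in> R0}"
definition "RQ = {x \<in> Rad_f f. g x \<in> R0}"

lemma key:
  assumes "g z \<in> R0" "g z' \<in> R0" "z \<noteq> 0" "ppoint smul z \<noteq> ppoint smul z'"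
    "w \<in> Rad_f f" "g w \<notin> R0" "smul z c + smul z' c' + smul w c3 = 0" "c \<noteq> 0"
  shows False
proof -
  have e: "z = smul z' (- (c' * inverse c)) + smul w (- (c3 * inverse c))"
    using solve3[OF assms(7,8)] .
  have "- (c3 * inverse c) = 0" using sum_sing[OF assms(1,2,5) e] assms(6) by blast
  hence "z = smul z' (- (c' * inverse c))" using e by (simp only: smv0 add_0_right)
  hence "ppoint smul z = ppoint smul z'" using pp_prop assms(3) by blast
  thus False using assms(4) by simp
qed

lemma sing_of_pp:
  assumes "ppoint smul s = ppoint smul z" "g s \<in> R0"
  shows "g z \<in> R0"
proof -
  obtain c where "z = smul s c" using pp_eqD assms(1) by metis
  thus ?thesis using g_sm assms(2) by blast
qed

lemma dir1:
  assumes U: "subspace smul U" and rad: "U \<subseteq> Rad_f f" and rq: "U \<inter> RQ = {0}"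
  shows "(ppoints smul U \<inter> Sg = {})
          \<and> (\<forall>L. is_line smul L \<and> (\<exists>p1 p2. p1 \<noteq> p2 \<and> p1 \<in> Sg \<and> p2 \<in> Sg
                   \<and> p1 \<in> ppoints smul L \<and> p2 \<in> ppoints smul L)
               \<longrightarrow> ppoints smul U \<inter> ppoints smul L = {})"
proof -
  have Usm: "\<And>u c. u \<in> U \<Longrightarrow> smul u c \<in> U" using U unfolding subspace_def by blast
  have nsing: "\<And>w. w \<in> U \<Longrightarrow> w \<noteq> 0 \<Longrightarrow> g w \<notin> R0"
  proof
    fix w assume "w \<in> U" "w \<noteq> 0" "g w \<in> R0"
    hence "w \<in> U \<inter> RQ" using rad unfolding RQ_def by blast
    thus False using rq \<open>w \<noteq> 0\<close> by blast
  qed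
  have inU: "\<And>u w. u \<in> U \<Longrightarrow> ppoint smul u = ppoint smul w \<Longrightarrow> w \<in> U"
  proof -
    fix u w assume "u \<in> U" "ppoint smul u = ppoint smul w"
    then obtain c where "w = smul u c" using pp_eqD by metis
    thus "w \<in> U" using Usm \<open>u \<in> U\<close> by blast
  qed
  have A: "ppoints smul U \<inter> Sg = {}"
  proof (rule ccontr)
    assume "ppoints smul U \<inter> Sg \<noteq> {}"
    then obtain u x where u: "u \<in> U" "u \<noteq> 0" and x: "x \<noteq> 0" "g x \<in> R0"
      and e: "ppoint smul u = ppoint smul x" unfolding ppoints_def Sg_def by blast
    have "x \<in> U" using inU[OF u(1) e] .
    thus False using nsing x by blast
  qed
  have B: "ppoints smul U \<inter> ppoints smul L = {}"
    if L: "is_line smul L" and p: "p1 \<noteq> p2" "p1 \<in> Sg" "p2 \<in> Sg" "p1 \<in> ppoints smul L" "p2 \<in> ppoints smul L"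
    for L p1 p2
  proof (rule ccontr)
    assume "ppoints smul U \<inter> ppoints smul L \<noteq> {}"
    then obtain u w where u: "u \<in> U" "u \<noteq> 0" and w: "w \<in> L" "w \<noteq> 0"
      and e: "ppoint smul u = ppoint smul w" unfolding ppoints_def by blast
    have wU: "w \<in> U" using inU[OF u(1) e] .
    have wrad: "w \<in> Rad_f f" using wU rad by blast
    have wns: "g w \<notin> R0" using nsing wU w(2) by blast
    obtain s1 z1 where s1: "p1 = ppoint smul s1" "g s1 \<in> R0" and z1: "p1 = ppoint smul z1" "z1 \<in> L" "z1 \<noteq> 0"
      using p(2,4) unfolding Sg_def ppoints_def by blast
    obtain s2 z2 where s2: "p2 = ppoint smul s2" "g s2 \<in> R0" and z2: "p2 = ppoint smul z2" "z2 \<in> L" "z2 \<noteq> 0"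
      using p(3,5) unfolding Sg_def ppoints_def by blast
    have g1: "g z1 \<in> R0" using sing_of_pp s1 z1 by metis
    have g2: "g z2 \<in> R0" using sing_of_pp s2 z2 by metis
    have neq: "ppoint smul z1 \<noteq> ppoint smul z2" using p(1) z1 z2 by simp
    obtain x y where L': "L = {smul x a + smul y b | a b. True}" using L unfolding is_line_def by blast
    obtain a1 b1 where 1: "z1 = smul x a1 + smul y b1" using z1(2) L' by blast
    obtain a2 b2 where 2: "z2 = smul x a2 + smul y b2" using z2(2) L' by blast
    obtain a3 b3 where 3: "w = smul x a3 + smul y b3" using w(1) L' by blast
    obtain c1 c2 c3 where c: "c1 \<noteq> 0 \<or> c2 \<noteq> 0 \<or> c3 \<noteq> 0"
      "a1*c1 + a2*c2 + a3*c3 = 0" "b1*c1 + b2*c2 + b3*c3 = 0" using dep3 by blast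
    have "smul z1 c1 + smul z2 c2 + smul w c3
        = smul x (a1*c1 + a2*c2 + a3*c3) + smul y (b1*c1 + b2*c2 + b3*c3)"
      unfolding 1 2 3 lincomb smS by (simp add: algebra_simps)
    hence Z: "smul z1 c1 + smul z2 c2 + smul w c3 = 0" using c(2,3) by (simp add: smv0)
    hence Z': "smul z2 c2 + smul z1 c1 + smul w c3 = 0" by (simp add: algebra_simps)
    show False
    proof (cases "c1 = 0")
      case False
      thus False using key[OF g1 g2 z1(3) neq wrad wns Z] by blast
    next
      case c10: True
      show False
      proof (cases "c2 = 0")
        case False
        thus False using key[OF g2 g1 z2(3) neq[symmetric] wrad wns Z'] by blast
      next
        case True
        hence "c3 \<noteq> 0" "smul w c3 = 0" using c(1) c10 Z by (auto simp: smv0)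
        thus False using sm_nz w(2) by blast
      qed
    qed
  qed
  show ?thesis using A B by blast
qed

end


context geo begin

lemma dir2:
  assumes U: "subspace smul U" and span: "rspan smul (\<Union>Sg) = UNIV"
    and A: "ppoints smul U \<inter> Sg = {}"
    and B: "\<forall>L. is_line smul L \<and> (\<exists>p1 p2. p1 \<noteq> p2 \<and> p1 \<in> Sg \<and> p2 \<in> Sg
                   \<and> p1 \<in> ppoints smul L \<and> p2 \<in> ppoints smul L)
               \<longrightarrow> ppoints smul U \<inter> ppoints smul L = {}"
  shows "U \<subseteq> Rad_f f \<and> U \<inter> RQ = {0}"
proof -
  have U0: "0 \<in> U" using U unfolding subspace_def by blast
  have nsing: "\<And>u. u \<in> U \<Longrightarrow> u \<noteq> 0 \<Longrightarrow> g u \<notin> R0"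
  proof
    fix u assume "u \<in> U" "u \<noteq> 0" "g u \<in> R0"
    hence "ppoint smul u \<in> ppoints smul U \<inter> Sg" unfolding ppoints_def Sg_def by blast
    thus False using A by blast
  qed
  have part2: "U \<inter> RQ = {0}"
  proof
    show "U \<inter> RQ \<subseteq> {0}" using nsing unfolding RQ_def by blast
    show "{0} \<subseteq> U \<inter> RQ" using U0 g0 f0l unfolding RQ_def Rad_f_def by blast
  qed
  have part1: "u \<in> Rad_f f" if uU: "u \<in> U" for u
  proof (rule ccontr)
    assume nr: "u \<notin> Rad_f f"
    then obtain y where y: "f u y \<noteq> 0" unfolding Rad_f_def by blast
    have "\<exists>x. x \<noteq> 0 \<and> g x \<in> R0 \<and> f u x \<noteq> 0"
    proof (rule ccontr)
      assume H: "\<not> (\<exists>x. x \<noteq> 0 \<and> g x \<in> R0 \<and> f u x \<noteq> 0)"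
      define W where "W = {v. f u v = 0}"
      have "subspace smul W" unfolding subspace_def W_def by (simp add: f0r fadd2 fr)
      moreover have "\<Union>Sg \<subseteq> W"
      proof
        fix v assume "v \<in> \<Union>Sg"
        then obtain x l where "x \<noteq> 0" "g x \<in> R0" "v = smul x l" unfolding Sg_def ppoint_def by blast
        thus "v \<in> W" using H unfolding W_def by (auto simp: fr)
      qed
      ultimately have "rspan smul (\<Union>Sg) \<subseteq> W" unfolding rspan_def by blast
      hence "y \<in> W" using span by blast
      thus False using y unfolding W_def by simp
    qed
    then obtain x where x: "x \<noteq> 0" "g x \<in> R0" "f u x \<noteq> 0" by blast
    have u0: "u \<noteq> 0" using y f0l by metis
    define c where "c = f u x"
    define l where "l = inverse c * (- g u)"
    define w where "w = u + smul x l"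
    have cl: "f u (smul x l) = - g u" unfolding fr l_def c_def using x(3)
      by (simp add: mult.assoc[symmetric])
    have gxl: "g (smul x l) \<in> R0" using g_sm x(2) by blast
    have "g (u + smul x l) - (g u + g (smul x l) + f u (smul x l)) \<in> R0" by (rule gadd)
    hence "g w - g (smul x l) \<in> R0" unfolding cl w_def by simp
    hence "(g w - g (smul x l)) + g (smul x l) \<in> R0" using gxl R0add by blast
    hence gw: "g w \<in> R0" by simp
    have ind: "a = 0 \<and> b = 0" if h: "smul u a + smul x b = 0" for a b
    proof (cases "a = 0")
      case False
      have "u = smul x (- (b * inverse a))" using solve2[OF h False] .
      hence "g u \<in> R0" using g_sm x(2) by blast
      thus ?thesis using nsing uU u0 by blast
    next
      case True
      hence "smul x b = 0" using h by (simp add: smv0)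
      thus ?thesis using True sm_nz x(1) by blast
    qed
    define L where "L = {smul u a + smul x b | a b. True}"
    have isL: "is_line smul L" unfolding is_line_def L_def using ind by blast
    have xL: "x \<in> L" unfolding L_def by (rule CollectI, rule exI[of _ 0], rule exI[of _ 1]) (simp add: smv0 sm1)
    have wL: "w \<in> L" unfolding L_def w_def by (rule CollectI, rule exI[of _ 1], rule exI[of _ l]) (simp add: sm1)
    have uL: "u \<in> L" unfolding L_def by (rule CollectI, rule exI[of _ 1], rule exI[of _ 0]) (simp add: smv0 sm1)
    have w0: "w \<noteq> 0"
    proof
      assume "w = 0"
      hence "smul u 1 + smul x l = 0" unfolding w_def by (simp add: sm1)
      thus False using ind by force
    qed
    have neq: "ppoint smul x \<noteq> ppoint smul w"
    proof
      assume "ppoint smul x = ppoint smul w"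
      then obtain m where "w = smul x m" using pp_eqD by metis
      hence "u + smul x l - smul x m = 0" unfolding w_def by simp
      hence "smul u 1 + smul x (l - m) = 0" unfolding smdiff[symmetric] sm1 by (simp add: algebra_simps)
      thus False using ind by force
    qed
    have "ppoint smul x \<in> Sg" "ppoint smul w \<in> Sg" using x w0 gw unfolding Sg_def by blast+
    moreover have "ppoint smul x \<in> ppoints smul L" "ppoint smul w \<in> ppoints smul L"
      using xL wL x(1) w0 unfolding ppoints_def by blast+
    ultimately have "ppoints smul U \<inter> ppoints smul L = {}" using B isL neq by blast
    moreover have "ppoint smul u \<in> ppoints smul U \<inter> ppoints smul L"
      using uU uL u0 unfolding ppoints_def by blast
    ultimately show False by blast
  qed
  show ?thesis using part1 part2 by blast
qed

end


theorem mainTheorem13: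
  fixes \<sigma> :: "'k::division_ring \<Rightarrow> 'k" and \<epsilon> :: 'k
    and smul :: "'v::ab_group_add \<Rightarrow> 'k \<Rightarrow> 'v"
    and R :: "'k set set" and q :: "'v \<Rightarrow> 'k set set" and f :: "'v \<Rightarrow> 'v \<Rightarrow> 'k"
    and U :: "'v set"
  assumes "admissible_pair \<sigma> \<epsilon>"
    and "right_vector_space smul"
    and "closed_subgroup \<sigma> \<epsilon> R"
    and "gen_quadratic_form \<sigma> \<epsilon> smul R q f"
    and "\<exists>x. q x \<noteq> R"
    and "rspan smul (\<Union>(Pq smul R q)) = UNIV"
    and "subspace smul U"
  shows "((ppoints smul U \<inter> Pq smul R q = {})
          \<and> (\<forall>L. is_line smul L \<and> (\<exists>p1 p2. p1 \<noteq> p2 \<and> p1 \<in> Pq smul R q \<and> p2 \<in> Pq smul R q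
                   \<and> p1 \<in> ppoints smul L \<and> p2 \<in> ppoints smul L)
               \<longrightarrow> ppoints smul U \<inter> ppoints smul L = {}))
     \<longleftrightarrow> (U \<subseteq> Rad_f f \<and> U \<inter> Rad_q f R q = {0})"
proof -
  interpret admR \<sigma> \<epsilon> R using assms(1,3) by (simp add: adm_def admR_def admR_axioms_def)
  have gq: "gen_quadratic_form \<sigma> \<epsilon> smul R q f" by fact
  have ex: "\<And>x. \<exists>a. q x = Q a"
  proof -
    fix x
    have "q x \<in> KbarR \<sigma> \<epsilon> R" using gq unfolding gen_quadratic_form_def by blast
    thus "\<exists>a. q x = Q a" unfolding KbarR_def Kbar_def by blast
  qed
  define g where "g x = (SOME a. q x = Q a)" for x
  have hq: "q x = Q (g x)" for x unfolding g_def using someI_ex[OF ex[of x]] .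
  have qsm: "q (smul x l) = qcirc \<sigma> \<epsilon> R (q x) l" for x l
    using gq unfolding gen_quadratic_form_def by blast
  have qadd: "q (x + y) = ssetplus (ssetplus (q x) (q y)) (qcoset (kbar \<sigma> \<epsilon> (f x y)) R)" for x y
    using gq unfolding gen_quadratic_form_def by blast
  have ftv: "trace_valued_sesquilinear \<sigma> \<epsilon> smul f" using gq unfolding gen_quadratic_form_def by blast
  have gsm: "g (smul x l) - \<sigma> l * g x * l \<in> R0" for x l
  proof -
    have "Q (g (smul x l)) = Q (\<sigma> l * g x * l)" using qsm[of x l] unfolding hq Q_circ .
    thus ?thesis using Q_eq by blast
  qed
  have gadd: "g (x + y) - (g x + g y + f x y) \<in> R0" for x y
  proof -
    have "Q (g (x + y)) = Q (g x + g y + f x y)" using qadd[of x y] unfolding hq Q_add .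
    thus ?thesis using Q_eq by blast
  qed
  interpret G: geo \<sigma> \<epsilon> smul f g R0
  proof (rule geo.intro)
    show "\<And>a b. \<sigma> (a * b) = \<sigma> b * \<sigma> a" by (rule smult)
    show "\<sigma> 1 = 1" by (rule s1)
    show "\<sigma> 0 = 0" by (rule s0)
    show "right_vector_space smul" by (rule assms(2))
    show "trace_valued_sesquilinear \<sigma> \<epsilon> smul f" by (rule ftv)
    show "0 \<in> R0" by (rule R00)
    show "\<And>a b. a \<in> R0 \<Longrightarrow> b \<in> R0 \<Longrightarrow> a + b \<in> R0" by (rule R0add)
    show "\<And>a. a \<in> R0 \<Longrightarrow> - a \<in> R0" by (rule R0neg)
    show "\<And>a l. a \<in> R0 \<Longrightarrow> \<sigma> l * a * l \<in> R0" by (rule R0circ)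
    show "\<And>x l. g (smul x l) - \<sigma> l * g x * l \<in> R0" by (rule gsm)
    show "\<And>x y. g (x + y) - (g x + g y + f x y) \<in> R0" by (rule gadd)
  qed
  have PS: "Pq smul R q = G.Sg"
    unfolding Pq_def G.Sg_def hq Q_is_R ..
  have RQ: "Rad_q f R q = G.RQ"
    unfolding Rad_q_def G.RQ_def hq Q_is_R ..
  have sp: "rspan smul (\<Union>G.Sg) = UNIV" using assms(6) unfolding PS .
  show ?thesis unfolding PS RQ
  proof
    assume H: "ppoints smul U \<inter> G.Sg = {} \<and> (\<forall>L. is_line smul L \<and> (\<exists>p1 p2. p1 \<noteq> p2 \<and> p1 \<in> G.Sg \<and> p2 \<in> G.Sg
                   \<and> p1 \<in> ppoints smul L \<and> p2 \<in> ppoints smul L)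
               \<longrightarrow> ppoints smul U \<inter> ppoints smul L = {})"
    show "U \<subseteq> Rad_f f \<and> U \<inter> G.RQ = {0}"
      using G.dir2[OF assms(7) sp conjunct1[OF H] conjunct2[OF H]] .
  next
    assume H: "U \<subseteq> Rad_f f \<and> U \<inter> G.RQ = {0}"
    show "ppoints smul U \<inter> G.Sg = {} \<and> (\<forall>L. is_line smul L \<and> (\<exists>p1 p2. p1 \<noteq> p2 \<and> p1 \<in> G.Sg \<and> p2 \<in> G.Sg
                   \<and> p1 \<in> ppoints smul L \<and> p2 \<in> ppoints smul L)
               \<longrightarrow> ppoints smul U \<inter> ppoints smul L = {})"
      using G.dir1[OF assms(7) conjunct1[OF H] conjunct2[OF H]] .
  qed
qed


end
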